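(* Let $\gamma:S^n\to\mathbb{R}_+$ be continuous and set $\widetilde W=\alpha_N^{-1}\circ Id(\mathcal{W}_\gamma)\subset S^{n+1}$. Then $\widetilde W=\widetilde W^{\circ}$ if and only if $\widetilde W$ is of constant width $\pi/2$.
   Context: $\mathcal{W}_\gamma=\bigcap_{\theta\in S^n}\{x\in\mathbb{R}^{n+1}: x\cdot\theta\le\gamma(\theta)\}$ is the Wulff shape of $\gamma$. $N=(0,\dots,0,1)\in S^{n+1}$, $Id(x)=(x,1)$, and $\alpha_N(P_1,\dots,P_{n+2})=(P_1/P_{n+2},\dots,P_{n+1}/P_{n+2},1)$ on $\{P\in S^{n+1}:P_{n+2}>0\}$ (central projection). For $P\in S^{n+1}$, $H(P)=\{Q\in S^{n+1}:P\cdot Q\ge0\}$. The spherical polar set of $\widetilde W\subset S^{n+1}$ is $\widetilde W^\circ=\bigcap_{P\in\widetilde W}H(P)$. $|PQ|=\arccos(P\cdot Q)$. $H(P)$ supports a spherical convex body $\widetilde W$ if $\widetilde W\subset H(P)$ and $\partial\widetilde W\cap\partial H(P)\ne\emptyset$. The lune $H(P)\cap H(Q)$ ($P\ne\pm Q$) has thickness $\pi-|PQ|$. For $H(P)$ supporting $\widetilde W$, $\mathrm{width}_{H(P)}\widetilde W$ is the minimum thickness of lunes $H(P)\cap H(Q)\supset\widetilde W$ with $H(Q)$ supporting $\widetilde W$; $\widetilde W$ is of constant width $\rho$ if this equals $\rho$ for every supporting hemisphere $H(P)$. *)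

theory Defs
  imports "HOL-Analysis.Analysis"
begin

text \<open>R^{n+1} is modelled by a Euclidean space 'a, R^{n+2} by 'a \<times> real.
  S^n = sphere (0::'a) 1, S^{n+1} = sphere (0::'a\<times>real) 1.\<close>

definition wulff_shape :: "('a::euclidean_space \<Rightarrow> real) \<Rightarrow> 'a set" where
  "wulff_shape \<gamma> = (\<Inter>\<theta>\<in>sphere 0 1. {x. x \<bullet> \<theta> \<le> \<gamma> \<theta>})"

definition Id_lift :: "'a::euclidean_space \<Rightarrow> 'a \<times> real" where
  "Id_lift x = (x, 1)"

text \<open>Central projection alpha_N, meaningful on the open upper hemisphere snd P > 0.\<close>
definition alpha_N :: "'a::euclidean_space \<times> real \<Rightarrow> 'a \<times> real" where
  "alpha_N P = ((1 / snd P) *\<^sub>R fst P, 1)"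

definition alpha_N_inv_image :: "('a::euclidean_space \<times> real) set \<Rightarrow> ('a \<times> real) set" where
  "alpha_N_inv_image A = {P \<in> sphere 0 1. snd P > 0 \<and> alpha_N P \<in> A}"

definition hemi :: "'b::real_inner \<Rightarrow> 'b set" where
  "hemi P = {Q \<in> sphere 0 1. P \<bullet> Q \<ge> 0}"

definition sph_polar :: "'b::real_inner set \<Rightarrow> 'b set" where
  "sph_polar W = sphere 0 1 \<inter> (\<Inter>P\<in>W. hemi P)"

definition sph_dist :: "'b::real_inner \<Rightarrow> 'b \<Rightarrow> real" where
  "sph_dist P Q = arccos (P \<bullet> Q)"

definition supports :: "'b::real_inner \<Rightarrow> 'b set \<Rightarrow> bool" where
  "supports P W \<longleftrightarrow> P \<in> sphere 0 1 \<and> W \<subseteq> hemi P \<and>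
     (top_of_set (sphere 0 1) frontier_of W) \<inter> (top_of_set (sphere 0 1) frontier_of hemi P) \<noteq> {}"

definition lune_thickness :: "'b::real_inner \<Rightarrow> 'b \<Rightarrow> real" where
  "lune_thickness P Q = pi - sph_dist P Q"

definition sph_width :: "'b::real_inner \<Rightarrow> 'b set \<Rightarrow> real" where
  "sph_width P W = Inf {lune_thickness P Q | Q. Q \<noteq> P \<and> Q \<noteq> - P \<and> supports Q W \<and> W \<subseteq> hemi P \<inter> hemi Q}"

definition constant_width :: "'b::real_inner set \<Rightarrow> real \<Rightarrow> bool" where
  "constant_width W \<rho> \<longleftrightarrow> (\<forall>P. supports P W \<longrightarrow> sph_width P W = \<rho>)"

end

theory Submission imports Defs begin

lemma not_interior_hemi:
  fixes P X :: "'b::euclidean_space"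
  assumes P: "P \<in> sphere 0 1" and X: "X \<in> sphere 0 1" and PX: "P \<bullet> X = 0"
    and A: "A \<subseteq> hemi P"
  shows "X \<notin> top_of_set (sphere 0 1) interior_of A"
proof
  assume "X \<in> top_of_set (sphere 0 1) interior_of A"
  then obtain T where T: "openin (top_of_set (sphere 0 1)) T" "X \<in> T" "T \<subseteq> A"
    unfolding interior_of_def by blast
  then obtain U where U: "open U" "T = sphere 0 1 \<inter> U" by (meson openin_open)
  have "X \<in> U" using T U by blast
  then obtain r where r: "r > 0" "ball X r \<subseteq> U" using U(1) open_contains_ball by blast
  define r' where "r' = min r 1"
  have r': "0 < r'" "r' \<le> r" "r' \<le> 1" using r unfolding r'_def by auto
  have r2: "r'^2 > 0" "r'^2 \<le> 1" using r' by (simp, simp add: power_le_one)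
  define a where "a = 1 - r'^2/4"
  have a1: "a < 1" "a \<ge> 3/4" using r2 unfolding a_def by linarith+
  have a2: "a^2 < 1" using a1 by (simp add: abs_square_less_1)
  define b where "b = sqrt (1 - a^2)"
  have b: "b > 0" "b^2 = 1 - a^2" using a2 unfolding b_def by simp_all
  define Z where "Z = a *\<^sub>R X - b *\<^sub>R P"
  have XX: "X \<bullet> X = 1" using X by (simp add: dot_square_norm)
  have PP: "P \<bullet> P = 1" using P by (simp add: dot_square_norm)
  have XP: "X \<bullet> P = 0" using PX by (simp add: inner_commute)
  have ZZ: "Z \<bullet> Z = a * a * (X \<bullet> X) - 2 * a * b * (X \<bullet> P) + b * b * (P \<bullet> P)"
    unfolding Z_def by (simp add: inner_diff_left inner_diff_right inner_commute algebra_simps)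
  hence "Z \<bullet> Z = a^2 + b^2" by (simp add: XX PP XP power2_eq_square)
  hence "Z \<bullet> Z = 1" using b by simp
  hence nZ: "norm Z = 1" by (simp add: norm_eq_sqrt_inner)
  have XZ: "(X - Z) \<bullet> (X - Z) = X \<bullet> X - 2 * (X \<bullet> Z) + Z \<bullet> Z"
    by (simp add: inner_diff_left inner_diff_right inner_commute)
  have "X \<bullet> Z = a" unfolding Z_def by (simp add: inner_diff_right XX XP)
  hence "(X - Z) \<bullet> (X - Z) = 2 - 2 * a" using XZ XX \<open>Z \<bullet> Z = 1\<close> by simp
  also have "\<dots> = r'^2/2" unfolding a_def by simp
  finally have "norm (X - Z)^2 = r'^2/2" by (simp add: power2_norm_eq_inner)
  moreover have "r'^2 \<le> r^2" using power_mono[of r' r 2] r' by simp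
  ultimately have "norm (X - Z)^2 < r^2" using r2 by linarith
  hence "norm (X - Z) < r" using r power_less_imp_less_base[of "norm (X - Z)" 2 r] by simp
  hence "Z \<in> ball X r" by (simp add: dist_norm)
  hence "Z \<in> U" using r by blast
  hence "Z \<in> T" using U nZ by simp
  hence "P \<bullet> Z \<ge> 0" using T A unfolding hemi_def by blast
  moreover have "P \<bullet> Z = - b" unfolding Z_def by (simp add: inner_diff_right PX PP)
  ultimately show False using b by simp
qed

lemma supports_char:
  fixes W :: "'b::euclidean_space set"
  assumes cW: "closed W" and WS: "W \<subseteq> sphere 0 1"
  shows "supports P W \<longleftrightarrow> P \<in> sphere 0 1 \<and> (\<forall>X\<in>W. 0 \<le> P \<bullet> X) \<and> (\<exists>X\<in>W. P \<bullet> X = 0)"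
proof
  assume s: "supports P W"
  hence P: "P \<in> sphere 0 1" and WH: "W \<subseteq> hemi P" by (auto simp: supports_def)
  have a: "\<forall>X\<in>W. 0 \<le> P \<bullet> X" using WH by (auto simp: hemi_def)
  obtain Y where Y1: "Y \<in> top_of_set (sphere 0 1) frontier_of W"
    and Y2: "Y \<in> top_of_set (sphere 0 1) frontier_of hemi P"
    using s by (auto simp: supports_def)
  have "closedin (top_of_set (sphere 0 1)) W" using cW WS by (simp add: closed_subset)
  hence YW: "Y \<in> W" using Y1 frontier_of_subset_closedin by blast
  have "Y \<notin> top_of_set (sphere 0 1) interior_of hemi P" using Y2 by (simp add: frontier_of_def)
  moreover have "P \<bullet> Y > 0 \<Longrightarrow> Y \<in> top_of_set (sphere 0 1) interior_of hemi P"
  proof -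
    assume "P \<bullet> Y > 0"
    have "openin (top_of_set (sphere 0 1)) (sphere 0 1 \<inter> {Q. P \<bullet> Q > 0})"
      by (simp add: openin_open_Int open_halfspace_gt)
    moreover have "sphere 0 1 \<inter> {Q. P \<bullet> Q > 0} \<subseteq> hemi P" by (auto simp: hemi_def)
    ultimately show ?thesis using \<open>P \<bullet> Y > 0\<close> YW WS unfolding interior_of_def by blast
  qed
  ultimately have "P \<bullet> Y = 0" using a YW by force
  with P a YW show "P \<in> sphere 0 1 \<and> (\<forall>X\<in>W. 0 \<le> P \<bullet> X) \<and> (\<exists>X\<in>W. P \<bullet> X = 0)" by blast
next
  assume h: "P \<in> sphere 0 1 \<and> (\<forall>X\<in>W. 0 \<le> P \<bullet> X) \<and> (\<exists>X\<in>W. P \<bullet> X = 0)"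
  then obtain X where X: "X \<in> W" "P \<bullet> X = 0" and P: "P \<in> sphere 0 1" by blast
  have WH: "W \<subseteq> hemi P" using h WS by (auto simp: hemi_def)
  have XS: "X \<in> sphere 0 1" using X WS by auto
  have c1: "X \<in> top_of_set (sphere 0 1) closure_of W"
    using closure_of_subset[where X="top_of_set (sphere 0 1)" and S=W] X(1) WS by auto
  have c2: "X \<in> top_of_set (sphere 0 1) closure_of hemi P"
  proof -
    have "hemi P \<subseteq> topspace (top_of_set (sphere 0 1))" by (auto simp: hemi_def)
    moreover have "X \<in> hemi P" using XS X(2) by (simp add: hemi_def)
    ultimately show ?thesis using closure_of_subset by blast
  qed
  have "X \<in> top_of_set (sphere 0 1) frontier_of W"
    unfolding frontier_of_def using not_interior_hemi[OF P XS X(2) WH] c1 by blast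
  moreover have "X \<in> top_of_set (sphere 0 1) frontier_of hemi P"
    unfolding frontier_of_def using not_interior_hemi[OF P XS X(2) order_refl] c2 by blast
  ultimately show "supports P W" using P WH unfolding supports_def by blast
qed

lemma unit_inner_bounds:
  fixes P Q :: "'b::real_inner"
  assumes "norm P = 1" "norm Q = 1"
  shows "-1 \<le> P \<bullet> Q \<and> P \<bullet> Q \<le> 1"
  using Cauchy_Schwarz_ineq2[of P Q] assms by auto

lemma max_trick:
  fixes W :: "'b::euclidean_space set"
  assumes cW: "compact W" and WS: "W \<subseteq> sphere 0 1"
    and u: "\<forall>X\<in>W. 0 \<le> u \<bullet> X" and X0: "X0 \<in> W" and neg: "(u - s0 *\<^sub>R d) \<bullet> X0 < 0"
    and s0: "0 \<le> s0"
  shows "\<exists>s. 0 \<le> s \<and> s < s0 \<and> (\<forall>X\<in>W. 0 \<le> (u - s *\<^sub>R d) \<bullet> X) \<and> (\<exists>X\<in>W. (u - s *\<^sub>R d) \<bullet> X = 0)"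
proof -
  define A where "A = {0..s0} \<inter> (\<Inter>X\<in>W. {s. 0 \<le> u \<bullet> X - s * (d \<bullet> X)})"
  have "closed (\<Inter>X\<in>W. {s::real. 0 \<le> u \<bullet> X - s * (d \<bullet> X)})"
    by (intro closed_INT ballI closed_Collect_le continuous_intros)
  hence cA: "compact A" unfolding A_def by (intro compact_Int_closed) auto
  have "0 \<in> A" using u s0 by (auto simp: A_def)
  then obtain s where sA: "s \<in> A" and smax: "\<forall>t\<in>A. t \<le> s"
    using compact_attains_sup[OF cA] by blast
  have eq: "\<And>t X. (u - t *\<^sub>R d) \<bullet> X = u \<bullet> X - t * (d \<bullet> X)" by (simp add: inner_diff_left)
  have s1: "0 \<le> s" "s \<le> s0" and s2: "\<forall>X\<in>W. 0 \<le> (u - s *\<^sub>R d) \<bullet> X" using sA by (auto simp: A_def eq)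
  have "s \<noteq> s0" using s2 X0 neg by force
  hence s3: "s < s0" using s1 by simp
  have "\<exists>X\<in>W. (u - s *\<^sub>R d) \<bullet> X = 0"
  proof (rule ccontr)
    assume "\<not> ?thesis"
    hence pos: "\<forall>X\<in>W. 0 < (u - s *\<^sub>R d) \<bullet> X" using s2 by force
    have "continuous_on W (\<lambda>X. (u - s *\<^sub>R d) \<bullet> X)" by (intro continuous_intros)
    then obtain X1 where X1: "X1 \<in> W" "\<forall>Y\<in>W. (u - s *\<^sub>R d) \<bullet> X1 \<le> (u - s *\<^sub>R d) \<bullet> Y"
      using continuous_attains_inf[OF cW] X0 by blast
    define \<delta> where "\<delta> = (u - s *\<^sub>R d) \<bullet> X1"
    have \<delta>: "\<delta> > 0" using pos X1 by (simp add: \<delta>_def)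
    define \<eta> where "\<eta> = min (s0 - s) (\<delta> / (norm d + 1))"
    have nd: "norm d + 1 > 0" using norm_ge_zero[of d] by linarith
    have dp: "\<delta> / (norm d + 1) > 0" using \<delta> nd by simp
    have \<eta>: "\<eta> > 0" "\<eta> \<le> s0 - s" "\<eta> \<le> \<delta> / (norm d + 1)" using dp s3
      by (auto simp: \<eta>_def)
    have "\<eta> * norm d < \<delta>"
    proof -
      have "\<eta> * norm d \<le> \<delta> / (norm d + 1) * norm d" by (rule mult_right_mono[OF \<eta>(3)]) simp
      also have "\<dots> = \<delta> - \<delta> / (norm d + 1)" using nd by (simp add: field_simps)
      also have "\<dots> < \<delta>" using dp by simp
      finally show ?thesis .
    qed
    have "s + \<eta> \<in> A"
    proof -
      have "0 \<le> u \<bullet> X - (s + \<eta>) * (d \<bullet> X)" if X: "X \<in> W" for X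
      proof -
        have "d \<bullet> X \<le> norm d" using Cauchy_Schwarz_ineq2[of d X] X WS by auto
        hence "\<eta> * (d \<bullet> X) \<le> \<eta> * norm d" using \<eta> by (simp add: mult_left_mono)
        moreover have "\<delta> \<le> u \<bullet> X - s * (d \<bullet> X)" using X1 X by (simp add: \<delta>_def eq)
        ultimately show ?thesis using \<open>\<eta> * norm d < \<delta>\<close> by (simp add: algebra_simps)
      qed
      thus ?thesis using \<eta> s1 by (auto simp: A_def)
    qed
    thus False using smax \<eta> by fastforce
  qed
  thus ?thesis using s1 s2 s3 by blast
qed

theorem proposition3p1:
  fixes \<gamma> :: "'a::euclidean_space \<Rightarrow> real"
  assumes "continuous_on (sphere 0 1) \<gamma>"
    and "\<And>\<theta>. \<theta> \<in> sphere 0 1 \<Longrightarrow> \<gamma> \<theta> > 0"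
  defines "W \<equiv> alpha_N_inv_image (Id_lift ` wulff_shape \<gamma>)"
  shows "W = sph_polar W \<longleftrightarrow> constant_width W (pi / 2)"
proof -
  note cont = assms(1) and gpos = assms(2) and Wdef = assms(3)
  define S :: "('a \<times> real) set" where "S = sphere 0 1"
  define E :: "'a \<times> real" where "E = (0, 1)"
  define C :: "('a \<times> real) set" where "C = {v. \<forall>\<theta>\<in>sphere 0 1. fst v \<bullet> \<theta> \<le> snd v * \<gamma> \<theta>}"
  define D where "D = sph_polar W"
  obtain b :: 'a where b: "b \<in> sphere 0 1"
    using SOME_Basis norm_Basis[of "SOME i. i \<in> Basis"] by (metis mem_sphere_0)
  obtain \<theta>0 where \<theta>0: "\<theta>0 \<in> sphere (0::'a) 1" "\<forall>\<theta>\<in>sphere 0 1. \<gamma> \<theta>0 \<le> \<gamma> \<theta>"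
    using continuous_attains_inf[OF compact_sphere _ cont] b by blast
  define m where "m = \<gamma> \<theta>0"
  have m: "m > 0" "\<And>\<theta>. \<theta> \<in> sphere 0 1 \<Longrightarrow> m \<le> \<gamma> \<theta>" using \<theta>0 gpos by (auto simp: m_def)
  have EX: "\<And>X. E \<bullet> X = snd X" by (simp add: E_def inner_Pair_0 inner_commute)
  have XE: "\<And>X. X \<bullet> E = snd X" by (simp add: E_def inner_Pair_0)
  have Wsnd: "\<And>X. X \<in> W \<Longrightarrow> snd X > 0"
    by (auto simp: Wdef alpha_N_inv_image_def)
  have W_eq: "W = S \<inter> C"
  proof (intro set_eqI iffI)
    fix P assume P: "P \<in> W"
    obtain x t where xt: "P = (x, t)" by fastforce
    have t: "t > 0" using Wsnd[OF P] xt by simp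
    have PS: "P \<in> S" using P by (auto simp: Wdef alpha_N_inv_image_def S_def)
    have "alpha_N P \<in> Id_lift ` wulff_shape \<gamma>" using P by (auto simp: Wdef alpha_N_inv_image_def)
    hence "(1 / t) *\<^sub>R x \<in> wulff_shape \<gamma>" by (auto simp: alpha_N_def Id_lift_def xt)
    hence "\<forall>\<theta>\<in>sphere 0 1. ((1 / t) *\<^sub>R x) \<bullet> \<theta> \<le> \<gamma> \<theta>" by (auto simp: wulff_shape_def)
    hence "\<forall>\<theta>\<in>sphere 0 1. x \<bullet> \<theta> \<le> t * \<gamma> \<theta>" using t by (auto simp: field_simps)
    thus "P \<in> S \<inter> C" using PS by (simp add: C_def xt)
  next
    fix P assume P: "P \<in> S \<inter> C"
    obtain x t where xt: "P = (x, t)" by fastforce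
    have xtC: "\<forall>\<theta>\<in>sphere 0 1. x \<bullet> \<theta> \<le> t * \<gamma> \<theta>" using P by (simp add: C_def xt)
    have t: "t > 0"
    proof (rule ccontr)
      assume "\<not> t > 0"
      hence tle: "t \<le> 0" by simp
      show False
      proof (cases "x = 0")
        case True
        have "norm (x, t) = 1" using P xt by (simp add: S_def)
        hence "t = -1" using True tle by (simp add: norm_Pair)
        thus False using xtC \<theta>0 gpos[OF \<theta>0(1)] True by fastforce
      next
        case False
        define \<theta> where "\<theta> = (1 / norm x) *\<^sub>R x"
        have "\<theta> \<in> sphere 0 1" using False by (simp add: \<theta>_def)
        hence "x \<bullet> \<theta> \<le> t * \<gamma> \<theta>" "\<gamma> \<theta> > 0" using xtC gpos by auto
        moreover have "x \<bullet> \<theta> = norm x" using False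
          by (simp add: \<theta>_def dot_square_norm power2_eq_square)
        moreover have "t * \<gamma> \<theta> \<le> 0" using tle \<open>\<gamma> \<theta> > 0\<close> by (simp add: mult_nonpos_nonneg)
        moreover have "norm x > 0" using False by simp
        ultimately show False by linarith
      qed
    qed
    have "\<forall>\<theta>\<in>sphere 0 1. ((1 / t) *\<^sub>R x) \<bullet> \<theta> \<le> \<gamma> \<theta>" using xtC t by (auto simp: field_simps)
    hence "(1 / t) *\<^sub>R x \<in> wulff_shape \<gamma>" by (simp add: wulff_shape_def)
    hence "alpha_N P \<in> Id_lift ` wulff_shape \<gamma>" by (auto simp: alpha_N_def Id_lift_def xt)
    thus "P \<in> W" using P t by (simp add: Wdef alpha_N_inv_image_def xt S_def)
  qed
  have Cscale: "\<And>v c. v \<in> C \<Longrightarrow> 0 \<le> c \<Longrightarrow> c *\<^sub>R v \<in> C"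
  proof -
    fix v :: "'a \<times> real" and c :: real assume v: "v \<in> C" and c: "0 \<le> c"
    have "\<forall>\<theta>\<in>sphere 0 1. c * (fst v \<bullet> \<theta>) \<le> c * (snd v * \<gamma> \<theta>)"
      using v c by (auto simp: C_def intro: mult_left_mono)
    thus "c *\<^sub>R v \<in> C" by (simp add: C_def mult.assoc)
  qed
  have Cball: "\<And>x. norm x \<le> m \<Longrightarrow> (x, 1) \<in> C"
  proof -
    fix x :: 'a assume x: "norm x \<le> m"
    have "x \<bullet> \<theta> \<le> \<gamma> \<theta>" if "\<theta> \<in> sphere 0 1" for \<theta>
      using Cauchy_Schwarz_ineq2[of x \<theta>] that x m(2)[OF that] by auto
    thus "(x, 1) \<in> C" by (simp add: C_def)
  qed
  have closedC: "closed C"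
  proof -
    have "C = (\<Inter>\<theta>\<in>sphere 0 1. {v. fst v \<bullet> \<theta> \<le> snd v * \<gamma> \<theta>})" by (auto simp: C_def)
    moreover have "closed (\<Inter>\<theta>\<in>sphere 0 1. {v::'a\<times>real. fst v \<bullet> \<theta> \<le> snd v * \<gamma> \<theta>})"
      by (intro closed_INT ballI closed_Collect_le continuous_intros)
    ultimately show ?thesis by simp
  qed
  have WS: "W \<subseteq> sphere 0 1" using W_eq by (auto simp: S_def)
  have cW: "compact W" using W_eq closedC by (simp add: S_def compact_Int_closed)
  have clW: "closed W" using cW compact_imp_closed by blast
  have ES: "E \<in> S" by (simp add: E_def S_def)
  have EW: "E \<in> W" using W_eq ES Cball[of 0] m by (simp add: E_def)
  have D_eq: "\<And>Q. Q \<in> D \<longleftrightarrow> Q \<in> S \<and> (\<forall>X\<in>W. 0 \<le> Q \<bullet> X)"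
    by (auto simp: D_def sph_polar_def hemi_def S_def inner_commute)
  have supp: "\<And>P. supports P W \<longleftrightarrow> P \<in> D \<and> (\<exists>X\<in>W. P \<bullet> X = 0)"
    using supports_char[OF clW WS] D_eq by (auto simp: S_def)
  have Cd_C: "\<And>v c. \<forall>X\<in>W. 0 \<le> v \<bullet> X \<Longrightarrow> c \<in> C \<Longrightarrow> 0 \<le> v \<bullet> c"
  proof -
    fix v c assume v: "\<forall>X\<in>W. 0 \<le> v \<bullet> X" and c: "c \<in> C"
    show "0 \<le> v \<bullet> c"
    proof (cases "c = 0")
      case False
      have "(1 / norm c) *\<^sub>R c \<in> W" using W_eq Cscale[OF c, of "1 / norm c"] False by (simp add: S_def)
      hence "0 \<le> (1 / norm c) * (v \<bullet> c)" using v by fastforce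
      thus ?thesis using False by (simp add: zero_le_divide_iff)
    qed simp
  qed
  have posE: "\<And>Q. Q \<in> D \<Longrightarrow> Q \<bullet> E > 0"
  proof -
    fix Q assume Q: "Q \<in> D"
    obtain q \<tau> where qt: "Q = (q, \<tau>)" by fastforce
    have QE: "Q \<bullet> E = \<tau>" by (simp add: XE qt)
    have QX: "\<forall>X\<in>W. 0 \<le> Q \<bullet> X" using Q D_eq by blast
    show "Q \<bullet> E > 0"
    proof (cases "q = 0")
      case True
      have "norm Q = 1" using Q D_eq by (simp add: S_def)
      hence "\<bar>\<tau>\<bar> = 1" using True by (simp add: qt norm_Pair)
      moreover have "0 \<le> \<tau>" using QX EW QE by force
      ultimately show ?thesis using QE by simp
    next
      case False
      define x where "x = - (m / norm q) *\<^sub>R q"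
      have "norm x = m" using False m by (simp add: x_def)
      hence "0 \<le> Q \<bullet> (x, 1)" using Cd_C[OF QX Cball] by simp
      moreover have "Q \<bullet> (x, 1) = \<tau> - m * norm q" using False
        by (simp add: qt x_def dot_square_norm power2_eq_square)
      moreover have "m * norm q > 0" using m False by simp
      ultimately show ?thesis using QE by linarith
    qed
  qed
  have pointed: "\<And>Q. Q \<in> D \<Longrightarrow> - Q \<notin> D"
  proof
    fix Q assume "Q \<in> D" "- Q \<in> D"
    hence "Q \<bullet> E > 0" "(- Q) \<bullet> E > 0" using posE by blast+
    thus False by simp
  qed
  have normalize: "\<And>v. \<forall>X\<in>W. 0 \<le> v \<bullet> X \<Longrightarrow> v \<noteq> 0 \<Longrightarrow> (1 / norm v) *\<^sub>R v \<in> D"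
    using D_eq by (auto simp: S_def)
  have ED: "E \<in> D" using D_eq ES EX Wsnd by (auto intro: less_imp_le)
  have cD: "compact D"
  proof -
    have "D = S \<inter> (\<Inter>X\<in>W. {Q. 0 \<le> Q \<bullet> X})" using D_eq by auto
    moreover have "closed (\<Inter>X\<in>W. {Q::'a\<times>real. 0 \<le> Q \<bullet> X})"
      by (intro closed_INT ballI closed_Collect_le continuous_intros)
    ultimately show ?thesis by (simp add: S_def compact_Int_closed)
  qed
  have sE: "snd E = 1" by (simp add: E_def)
  have EWp: "\<forall>X\<in>W. 0 \<le> E \<bullet> X" using ED D_eq by blast
  have DS: "\<And>Q. Q \<in> D \<Longrightarrow> norm Q = 1" using D_eq by (simp add: S_def)
  have WD: "W \<subseteq> D \<Longrightarrow> \<forall>X\<in>W. \<forall>Y\<in>W. 0 \<le> X \<bullet> Y" using D_eq by blast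
  show ?thesis
  proof
    assume eq: "W = sph_polar W"
    hence DW: "D = W" by (simp add: D_def)
    show "constant_width W (pi / 2)" unfolding constant_width_def
    proof (intro allI impI)
      fix P assume sP: "supports P W"
      then obtain X where PD: "P \<in> D" and X: "X \<in> W" "P \<bullet> X = 0" using supp by blast
      have XD: "X \<in> D" using X DW by simp
      have PW: "P \<in> W" using PD DW by simp
      have sX: "supports X W" using supp XD PW X by (metis inner_commute)
      have nP: "norm P = 1" "norm X = 1" using DS PD XD by auto
      have PP: "P \<bullet> P = 1" using nP by (simp add: dot_square_norm)
      have mem: "pi / 2 \<in> {lune_thickness P Q |Q. Q \<noteq> P \<and> Q \<noteq> - P \<and> supports Q W \<and> W \<subseteq> hemi P \<inter> hemi Q}"
      proof -
        have "X \<noteq> P" using X PP by auto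
        moreover have "X \<noteq> - P" using X PP by auto
        moreover have "W \<subseteq> hemi P \<inter> hemi X" using sP sX by (auto simp: supports_def)
        moreover have "lune_thickness P X = pi / 2" using X by (simp add: lune_thickness_def sph_dist_def)
        ultimately have "pi / 2 = lune_thickness P X \<and> X \<noteq> P \<and> X \<noteq> - P \<and> supports X W \<and> W \<subseteq> hemi P \<inter> hemi X" using sX by simp
        thus ?thesis by blast
      qed
      show "sph_width P W = pi / 2" unfolding sph_width_def
      proof (rule cInf_eq_minimum[OF mem])
        fix t assume "t \<in> {lune_thickness P Q |Q. Q \<noteq> P \<and> Q \<noteq> - P \<and> supports Q W \<and> W \<subseteq> hemi P \<inter> hemi Q}"
        then obtain Q where t: "t = lune_thickness P Q" and sQ: "supports Q W" by blast
        have QD: "Q \<in> D" using sQ supp by blast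
        have "0 \<le> P \<bullet> Q" using QD DW PD D_eq by (metis inner_commute)
        moreover have "P \<bullet> Q \<le> 1" using unit_inner_bounds[of P Q] DS QD PD by auto
        ultimately have "arccos (P \<bullet> Q) \<le> arccos 0" using arccos_le_arccos[of 0 "P \<bullet> Q"] by simp
        thus "pi / 2 \<le> t" by (simp add: t lune_thickness_def sph_dist_def)
      qed
    qed
  next
    assume cw: "constant_width W (pi / 2)"
    have KC: "\<And>P Q. supports P W \<Longrightarrow> supports Q W \<Longrightarrow> Q \<noteq> P \<Longrightarrow> Q \<noteq> - P \<Longrightarrow> 0 \<le> P \<bullet> Q"
    proof -
      fix P Q assume sP: "supports P W" and sQ: "supports Q W" and ne: "Q \<noteq> P" "Q \<noteq> - P"
      let ?T = "{lune_thickness P Q |Q. Q \<noteq> P \<and> Q \<noteq> - P \<and> supports Q W \<and> W \<subseteq> hemi P \<inter> hemi Q}"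
      have w0: "sph_width P W = pi / 2" using cw sP unfolding constant_width_def by blast
      have w: "Inf ?T = pi / 2" using w0 unfolding sph_width_def .
      have "W \<subseteq> hemi P \<inter> hemi Q" using sP sQ by (auto simp: supports_def)
      hence "lune_thickness P Q \<in> ?T" using sQ ne by blast
      moreover have "bdd_below ?T"
      proof (rule bdd_belowI[of _ 0])
        fix t assume "t \<in> ?T"
        then obtain Q' where t: "t = lune_thickness P Q'" and sQ': "supports Q' W" by blast
        have "-1 \<le> P \<bullet> Q' \<and> P \<bullet> Q' \<le> 1" using unit_inner_bounds[of P Q'] DS supp sP sQ' by blast
        thus "0 \<le> t" using arccos_ubound[of "P \<bullet> Q'"] by (simp add: t lune_thickness_def sph_dist_def)
      qed
      ultimately have "Inf ?T \<le> lune_thickness P Q" by (rule cInf_lower)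
      hence "pi / 2 \<le> lune_thickness P Q" using w by simp
      hence le: "arccos (P \<bullet> Q) \<le> arccos 0" by (simp add: lune_thickness_def sph_dist_def)
      have b: "-1 \<le> P \<bullet> Q" using unit_inner_bounds[of P Q] DS supp sP sQ by blast
      show "0 \<le> P \<bullet> Q"
      proof (rule ccontr)
        assume "\<not> 0 \<le> P \<bullet> Q"
        hence "arccos 0 < arccos (P \<bullet> Q)" using b arccos_less_arccos[of "P \<bullet> Q" 0] by simp
        thus False using le by simp
      qed
    qed
    have step: "\<And>u n. u \<in> D \<Longrightarrow> n \<in> D \<Longrightarrow> u \<bullet> n < 0 \<Longrightarrow> \<exists>u'. supports u' W \<and> u' \<in> D \<and> u' \<bullet> n < 0"
    proof -
      fix u n assume uD: "u \<in> D" and nD: "n \<in> D" and un: "u \<bullet> n < 0"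
      have uE: "u \<bullet> E > 0" and nE: "n \<bullet> E > 0" using posE uD nD by auto
      define s0 where "s0 = (u \<bullet> E) / (n \<bullet> E) + 1"
      have s0: "0 \<le> s0" using uE nE by (simp add: s0_def)
      have "(u - s0 *\<^sub>R n) \<bullet> E = - (n \<bullet> E)" using nE
        by (simp add: s0_def inner_diff_left field_simps)
      hence neg: "(u - s0 *\<^sub>R n) \<bullet> E < 0" using nE by simp
      obtain s where s: "0 \<le> s" "\<forall>X\<in>W. 0 \<le> (u - s *\<^sub>R n) \<bullet> X" "\<exists>X\<in>W. (u - s *\<^sub>R n) \<bullet> X = 0"
        using max_trick[OF cW WS _ EW neg s0] uD D_eq by meson
      define v where "v = u - s *\<^sub>R n"
      have nn: "n \<bullet> n = 1" using DS[OF nD] by (simp add: dot_square_norm)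
      have vn: "v \<bullet> n < 0" using un s(1) nn by (simp add: v_def inner_diff_left)
      hence v0: "v \<noteq> 0" by auto
      define u' where "u' = (1 / norm v) *\<^sub>R v"
      have u'D: "u' \<in> D" using normalize[OF _ v0] s(2) by (simp add: u'_def v_def)
      have "\<exists>X\<in>W. u' \<bullet> X = 0" using s(3) by (auto simp: u'_def v_def)
      hence "supports u' W" using supp u'D by blast
      moreover have "u' \<bullet> n < 0" using vn v0 divide_neg_pos[of "v \<bullet> n" "norm v"] by (simp add: u'_def)
      ultimately show "\<exists>u'. supports u' W \<and> u' \<in> D \<and> u' \<bullet> n < 0" using u'D by blast
    qed
    have PN: "\<And>u n. u \<in> D \<Longrightarrow> n \<in> D \<Longrightarrow> 0 \<le> u \<bullet> n"
    proof (rule ccontr)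
      fix u n assume uD: "u \<in> D" and nD: "n \<in> D" and "\<not> 0 \<le> u \<bullet> n"
      hence "u \<bullet> n < 0" by simp
      then obtain u' where u': "supports u' W" "u' \<in> D" "u' \<bullet> n < 0" using step uD nD by blast
      hence "n \<bullet> u' < 0" by (simp add: inner_commute)
      then obtain n' where n': "supports n' W" "n' \<in> D" "n' \<bullet> u' < 0" using step nD u' by blast
      have "u' \<bullet> u' = 1" using DS[OF u'(2)] by (simp add: dot_square_norm)
      hence "n' \<noteq> u'" using n' by auto
      moreover have "n' \<noteq> - u'" using pointed u'(2) n'(2) by blast
      ultimately have "0 \<le> u' \<bullet> n'" using KC u'(1) n'(1) by blast
      thus False using n' by (simp add: inner_commute)
    qed
    have DsubW: "D \<subseteq> W"
    proof
      fix u assume uD: "u \<in> D"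
      have "fst u \<bullet> \<theta> \<le> snd u * \<gamma> \<theta>" if \<theta>: "\<theta> \<in> sphere 0 1" for \<theta>
      proof -
        define n where "n = (- \<theta>, \<gamma> \<theta>)"
        have nC: "\<forall>X\<in>W. 0 \<le> n \<bullet> X"
        proof
          fix X assume "X \<in> W"
          hence "X \<in> C" using W_eq by auto
          hence "fst X \<bullet> \<theta> \<le> snd X * \<gamma> \<theta>" using \<theta> by (auto simp: C_def)
          thus "0 \<le> n \<bullet> X" by (cases X) (simp add: n_def inner_commute mult.commute)
        qed
        have n0: "n \<noteq> 0"
        proof
          assume "n = 0"
          hence "snd n = 0" by simp
          thus False using gpos[OF \<theta>] by (simp add: n_def)
        qed
        have "0 \<le> u \<bullet> ((1 / norm n) *\<^sub>R n)" using PN[OF uD normalize[OF nC n0]] .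
        hence "0 \<le> u \<bullet> n" using n0 by (simp add: zero_le_divide_iff)
        thus ?thesis by (cases u) (simp add: n_def mult.commute inner_commute)
      qed
      hence "u \<in> C" by (simp add: C_def)
      moreover have "u \<in> S" using uD D_eq by blast
      ultimately show "u \<in> W" using W_eq by simp
    qed
    have WsubD: "W \<subseteq> D"
    proof (rule ccontr)
      assume "\<not> W \<subseteq> D"
      then obtain Y0 where Y0: "Y0 \<in> W" "Y0 \<notin> D" by blast
      have Y0S: "Y0 \<in> S" using Y0(1) WS by (auto simp: S_def)
      hence "\<not> (\<forall>X\<in>W. 0 \<le> Y0 \<bullet> X)" using Y0(2) D_eq by blast
      then obtain X0 where X0: "X0 \<in> W" "Y0 \<bullet> X0 < 0" by (auto simp: not_le)
      have neg: "(E - 1 *\<^sub>R (E - Y0)) \<bullet> X0 < 0" using X0 by simp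
      obtain s where s: "0 \<le> s" "s < 1" "\<forall>X\<in>W. 0 \<le> (E - s *\<^sub>R (E - Y0)) \<bullet> X"
        "\<exists>X\<in>W. (E - s *\<^sub>R (E - Y0)) \<bullet> X = 0"
        using max_trick[OF cW WS EWp X0(1) neg zero_le_one] by blast
      define v where "v = E - s *\<^sub>R (E - Y0)"
      have Y0E: "snd Y0 > 0" using Wsnd Y0 by blast
      have "v \<bullet> E = 1 - s + s * snd Y0" using ES
        by (simp add: v_def inner_diff_left XE sE algebra_simps)
      moreover have "s * snd Y0 \<ge> 0" using s Y0E by simp
      ultimately have "v \<bullet> E > 0" using s by linarith
      hence v0: "v \<noteq> 0" by auto
      define P where "P = (1 / norm v) *\<^sub>R v"
      have PD: "P \<in> D" using normalize[OF _ v0] s(3) by (simp add: P_def v_def)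
      obtain X1 where X1: "X1 \<in> W" "v \<bullet> X1 = 0" using s(4) v_def by blast
      have PX1: "P \<bullet> X1 = 0" using X1 by (simp add: P_def)
      have sP: "supports P W" using supp PD PX1 X1 by blast
      have Ppos: "\<And>Q. Q \<in> D \<Longrightarrow> 0 < P \<bullet> Q"
      proof -
        fix Q assume QD: "Q \<in> D"
        have "v \<bullet> Q = (1 - s) * (Q \<bullet> E) + s * (Q \<bullet> Y0)"
          by (simp add: v_def inner_diff_left inner_commute algebra_simps)
        moreover have "Q \<bullet> E > 0" using posE QD by blast
        moreover have "Q \<bullet> Y0 \<ge> 0" using QD D_eq Y0 by blast
        moreover have "(1 - s) * (Q \<bullet> E) > 0" using s \<open>Q \<bullet> E > 0\<close> by simp
        moreover have "s * (Q \<bullet> Y0) \<ge> 0" using s \<open>Q \<bullet> Y0 \<ge> 0\<close> by simp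
        ultimately have "v \<bullet> Q > 0" by linarith
        thus "0 < P \<bullet> Q" using v0 by (simp add: P_def)
      qed
      have "continuous_on D (\<lambda>Q. P \<bullet> Q)" by (intro continuous_intros)
      then obtain Qm where Qm: "Qm \<in> D" "\<forall>Q\<in>D. P \<bullet> Qm \<le> P \<bullet> Q"
        using continuous_attains_inf[OF cD] ED by blast
      define \<delta> where "\<delta> = P \<bullet> Qm"
      have \<delta>: "0 < \<delta>" "\<delta> \<le> 1" using Ppos[OF Qm(1)] unit_inner_bounds[of P Qm] DS PD Qm(1)
        by (auto simp: \<delta>_def)
      let ?T = "{lune_thickness P Q |Q. Q \<noteq> P \<and> Q \<noteq> - P \<and> supports Q W \<and> W \<subseteq> hemi P \<inter> hemi Q}"
      have w0: "sph_width P W = pi / 2" using cw sP unfolding constant_width_def by blast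
      have w: "Inf ?T = pi / 2" using w0 unfolding sph_width_def .
      have Tne: "?T \<noteq> {}"
      proof -
        have PE: "P \<bullet> E > 0" using posE PD by blast
        define s0 where "s0 = 1 / (P \<bullet> E) + 1"
        have s0: "0 \<le> s0" using PE by (simp add: s0_def)
        have "(E - s0 *\<^sub>R P) \<bullet> E = - (P \<bullet> E)" using PE ES
          by (simp add: s0_def inner_diff_left field_simps S_def dot_square_norm)
        hence neg: "(E - s0 *\<^sub>R P) \<bullet> E < 0" using PE by simp
        obtain s' where s': "\<forall>X\<in>W. 0 \<le> (E - s' *\<^sub>R P) \<bullet> X" "\<exists>X\<in>W. (E - s' *\<^sub>R P) \<bullet> X = 0"
          using max_trick[OF cW WS EWp EW neg s0] by blast
        define v' where "v' = E - s' *\<^sub>R P"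
        have EX1: "E \<bullet> X1 > 0" using EX Wsnd X1 by simp
        have v'0: "v' \<noteq> 0"
        proof
          assume "v' = 0"
          hence "E = s' *\<^sub>R P" by (simp add: v'_def)
          hence "E \<bullet> X1 = 0" using PX1 by simp
          thus False using EX1 by simp
        qed
        define Q' where "Q' = (1 / norm v') *\<^sub>R v'"
        have Q'D: "Q' \<in> D" using normalize[OF _ v'0] s'(1) by (simp add: Q'_def v'_def)
        have "\<exists>X\<in>W. Q' \<bullet> X = 0" using s'(2) by (auto simp: Q'_def v'_def)
        hence sQ': "supports Q' W" using supp Q'D by blast
        have Eeq: "E = s' *\<^sub>R P + norm v' *\<^sub>R Q'" using v'0 by (simp add: Q'_def v'_def)
        have "Q' \<noteq> P"
        proof
          assume "Q' = P"
          hence "E \<bullet> X1 = 0" using Eeq PX1 by (simp add: inner_add_left)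
          thus False using EX1 by simp
        qed
        moreover have "Q' \<noteq> - P"
        proof
          assume "Q' = - P"
          hence "E \<bullet> X1 = 0" using Eeq PX1 by (simp add: inner_add_left inner_diff_left)
          thus False using EX1 by simp
        qed
        moreover have "W \<subseteq> hemi P \<inter> hemi Q'" using sP sQ' by (auto simp: supports_def)
        ultimately have "lune_thickness P Q' \<in> ?T" using sQ' by blast
        thus ?thesis by blast
      qed
      have "pi - arccos \<delta> \<le> Inf ?T"
      proof (rule cInf_greatest[OF Tne])
        fix t assume "t \<in> ?T"
        then obtain Q where t: "t = lune_thickness P Q" and sQ: "supports Q W" by blast
        have QD: "Q \<in> D" using sQ supp by blast
        have "\<delta> \<le> P \<bullet> Q" using Qm QD by (simp add: \<delta>_def)
        moreover have "P \<bullet> Q \<le> 1" using unit_inner_bounds[of P Q] DS QD PD by auto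
        ultimately have "arccos (P \<bullet> Q) \<le> arccos \<delta>" using \<delta> arccos_le_arccos[of \<delta> "P \<bullet> Q"] by simp
        thus "pi - arccos \<delta> \<le> t" by (simp add: t lune_thickness_def sph_dist_def)
      qed
      hence "arccos 0 \<le> arccos \<delta>" using w by simp
      moreover have "arccos \<delta> < arccos 0" using \<delta> arccos_less_arccos[of 0 \<delta>] by simp
      ultimately show False by simp
    qed
    show "W = sph_polar W" using DsubW WsubD by (simp add: D_def)
  qed
qed

end
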